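(* Let $G=(V(G),E(G))$ be a locally finite, connected weighted graph with the random walk $m^G$ and measure $\nu_G$ defined below, satisfying the standing assumptions below, and let $\Omega\subset V(G)$ be a finite set of vertices with $0<\nu_G(\Omega)<\nu_G(V(G))$. Then $(m^G,\nu_G)$ satisfies a $p$-Poincaré inequality in $\Omega$ for every $p\ge1$.
   Context: Each edge $x\sim y$ has a weight $w_{xy}=w_{yx}>0$, with $w_{xy}=0$ if $x,y$ are not adjacent; locally finite means every vertex has finitely many neighbours; $V(G)$ carries the shortest-path graph distance. $d_x:=\sum_{y\in V(G)}w_{xy}$, $m^G_x:=\frac{1}{d_x}\sum_{y\sim x}w_{xy}\delta_y$, $\nu_G(A):=\sum_{x\in A}d_x$; $\nu_G$ is invariant and reversible for $m^G$. Standing assumption: $\nu_G(V(G))<\infty$. With $m=m^G$, $\nu=\nu_G$: $\partial_m\Omega:=\{x\in V(G)\setminus\Omega: m_x(\Omega)>0\}$, $\Omega_m:=\Omega\cup\partial_m\Omega$; for $u:\Omega\to\mathbb{R}$ and $\psi$ on $\partial_m\Omega$, $u_\psi$ equals $u$ on $\Omega$ and $\psi$ on $\partial_m\Omega$. For $q\ge1$, $(m,\nu)$ satisfies a $q$-Poincaré inequality in $\Omega$ if there is $\lambda>0$ such that $\lambda\int_\Omega|u(x)|^q\,d\nu(x)\le\int_\Omega\int_{\Omega_m}|u_\psi(y)-u(x)|^q\,dm_x(y)\,d\nu(x)+\int_{\partial_m\Omega}|\psi(y)|^q\,d\nu(y)$ for all $u\in L^q(\Omega,\nu)$ and all $\psi\in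 L^q(\partial_m\Omega,\nu)$. *)

theory Defs
  imports "HOL-Analysis.Analysis"
begin

text \<open>A weighted graph on the vertex type 'a (vertex set V(G) = UNIV), given by a weight
function w with w x y = w y x \<ge> 0, and x ~ y iff w x y > 0.\<close>

definition nbrs :: "('a \<Rightarrow> 'a \<Rightarrow> real) \<Rightarrow> 'a \<Rightarrow> 'a set" where
  "nbrs w x = {y. 0 < w x y}"

definition weighted_graph :: "('a \<Rightarrow> 'a \<Rightarrow> real) \<Rightarrow> bool" where
  "weighted_graph w \<longleftrightarrow> (\<forall>x y. w x y = w y x \<and> 0 \<le> w x y)"

definition locally_finite :: "('a \<Rightarrow> 'a \<Rightarrow> real) \<Rightarrow> bool" where
  "locally_finite w \<longleftrightarrow> (\<forall>x. finite (nbrs w x))"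

definition graph_connected :: "('a \<Rightarrow> 'a \<Rightarrow> real) \<Rightarrow> bool" where
  "graph_connected w \<longleftrightarrow> (\<forall>x y. (\<lambda>a b. 0 < w a b)\<^sup>*\<^sup>* x y)"

definition deg :: "('a \<Rightarrow> 'a \<Rightarrow> real) \<Rightarrow> 'a \<Rightarrow> real" where
  "deg w x = (\<Sum>y\<in>nbrs w x. w x y)"

definition nuG :: "('a \<Rightarrow> 'a \<Rightarrow> real) \<Rightarrow> 'a set \<Rightarrow> real" where
  "nuG w A = infsum (deg w) A"

definition mG :: "('a \<Rightarrow> 'a \<Rightarrow> real) \<Rightarrow> 'a \<Rightarrow> 'a set \<Rightarrow> real" where
  "mG w x A = (\<Sum>y\<in>nbrs w x \<inter> A. w x y) / deg w x"

definition mG_int :: "('a \<Rightarrow> 'a \<Rightarrow> real) \<Rightarrow> 'a \<Rightarrow> 'a set \<Rightarrow> ('a \<Rightarrow> real) \<Rightarrow> real" where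
  "mG_int w x A f = (\<Sum>y\<in>nbrs w x \<inter> A. (w x y / deg w x) * f y)"

definition nuG_int :: "('a \<Rightarrow> 'a \<Rightarrow> real) \<Rightarrow> 'a set \<Rightarrow> ('a \<Rightarrow> real) \<Rightarrow> real" where
  "nuG_int w A f = infsum (\<lambda>x. deg w x * f x) A"

definition mboundary :: "('a \<Rightarrow> 'a \<Rightarrow> real) \<Rightarrow> 'a set \<Rightarrow> 'a set" where
  "mboundary w \<Omega> = {x. x \<notin> \<Omega> \<and> 0 < mG w x \<Omega>}"

definition mclosure :: "('a \<Rightarrow> 'a \<Rightarrow> real) \<Rightarrow> 'a set \<Rightarrow> 'a set" where
  "mclosure w \<Omega> = \<Omega> \<union> mboundary w \<Omega>"

definition ext_psi :: "'a set \<Rightarrow> ('a \<Rightarrow> real) \<Rightarrow> ('a \<Rightarrow> real) \<Rightarrow> 'a \<Rightarrow> real" where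
  "ext_psi \<Omega> u \<psi> y = (if y \<in> \<Omega> then u y else \<psi> y)"

text \<open>q-Poincare inequality in Omega for (m^G, nu_G). Membership in L^q is expressed
  as finiteness of the q-th moment (summability of d_x |f x|^q).\<close>
definition poincare_ineq :: "('a \<Rightarrow> 'a \<Rightarrow> real) \<Rightarrow> real \<Rightarrow> 'a set \<Rightarrow> bool" where
  "poincare_ineq w q \<Omega> \<longleftrightarrow> (\<exists>c>0. \<forall>u \<psi>.
     (\<lambda>x. deg w x * \<bar>u x\<bar> powr q) summable_on \<Omega> \<longrightarrow>
     (\<lambda>x. deg w x * \<bar>\<psi> x\<bar> powr q) summable_on (mboundary w \<Omega>) \<longrightarrow>
     c * nuG_int w \<Omega> (\<lambda>x. \<bar>u x\<bar> powr q)
       \<le> nuG_int w \<Omega> (\<lambda>x. mG_int w x (mclosure w \<Omega>)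
                (\<lambda>y. \<bar>ext_psi \<Omega> u \<psi> y - u x\<bar> powr q))
         + nuG_int w (mboundary w \<Omega>) (\<lambda>y. \<bar>\<psi> y\<bar> powr q))"

end

theory Submission
  imports Defs
begin

definition RR :: "('a \<Rightarrow> 'a \<Rightarrow> real) \<Rightarrow> 'a set \<Rightarrow> real \<Rightarrow> ('a \<Rightarrow> real) \<Rightarrow> ('a \<Rightarrow> real) \<Rightarrow> real" where
  "RR w \<Omega> p u \<psi> = nuG_int w \<Omega> (\<lambda>x. mG_int w x (mclosure w \<Omega>)
                (\<lambda>y. \<bar>ext_psi \<Omega> u \<psi> y - u x\<bar> powr p))
         + nuG_int w (mboundary w \<Omega>) (\<lambda>y. \<bar>\<psi> y\<bar> powr p)"

lemma deg_nonneg: "weighted_graph w \<Longrightarrow> 0 \<le> deg w x"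
  unfolding deg_def weighted_graph_def by (simp add: sum_nonneg)

lemma deg_ge: assumes "weighted_graph w" "locally_finite w" "0 < w x y"
  shows "w x y \<le> deg w x"
proof -
  have f: "finite (nbrs w x)" using assms(2) by (simp add: locally_finite_def)
  have "y \<in> nbrs w x" using assms(3) by (simp add: nbrs_def)
  then show ?thesis unfolding deg_def
    by (rule member_le_sum[OF _ _ f, where f="w x"]) (simp add: nbrs_def less_imp_le)
qed

lemma finite_bd: assumes "weighted_graph w" "locally_finite w" "finite \<Omega>"
  shows "finite (mboundary w \<Omega>)"
proof -
  have "mboundary w \<Omega> \<subseteq> (\<Union>x\<in>\<Omega>. nbrs w x)"
  proof
    fix y assume y: "y \<in> mboundary w \<Omega>"
    then have "0 < mG w y \<Omega>" by (simp add: mboundary_def)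
    then have "nbrs w y \<inter> \<Omega> \<noteq> {}" unfolding mG_def by auto
    then obtain x where "x \<in> \<Omega>" "0 < w y x" by (auto simp: nbrs_def)
    then show "y \<in> (\<Union>x\<in>\<Omega>. nbrs w x)" using assms(1)
      by (auto simp: nbrs_def weighted_graph_def)
  qed
  moreover have "finite (\<Union>x\<in>\<Omega>. nbrs w x)" using assms(2,3) by (simp add: locally_finite_def)
  ultimately show ?thesis by (rule finite_subset)
qed

lemma RR_parts_nonneg:
  assumes "weighted_graph w"
  shows "0 \<le> deg w x' * mG_int w x' (mclosure w \<Omega>) (\<lambda>y. \<bar>ext_psi \<Omega> u \<psi> y - u x'\<bar> powr p)"
  using assms unfolding mG_int_def
  by (intro mult_nonneg_nonneg deg_nonneg sum_nonneg)
     (auto simp: nbrs_def intro!: divide_nonneg_nonneg deg_nonneg)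

lemma RR_edge:
  assumes wg: "weighted_graph w" and lf: "locally_finite w" and fin: "finite \<Omega>"
    and x: "x \<in> \<Omega>" and wxy: "0 < w x y" and y: "y \<in> mclosure w \<Omega>"
  shows "w x y * \<bar>ext_psi \<Omega> u \<psi> y - u x\<bar> powr p \<le> RR w \<Omega> p u \<psi>"
proof -
  define g where "g x' = deg w x' * mG_int w x' (mclosure w \<Omega>) (\<lambda>y. \<bar>ext_psi \<Omega> u \<psi> y - u x'\<bar> powr p)" for x'
  have g0: "\<And>x'. 0 \<le> g x'" unfolding g_def by (rule RR_parts_nonneg[OF wg])
  have dpos: "0 < deg w x" using deg_ge[OF wg lf wxy] wxy by linarith
  have fn: "finite (nbrs w x \<inter> mclosure w \<Omega>)" using lf by (simp add: locally_finite_def)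
  have "w x y * \<bar>ext_psi \<Omega> u \<psi> y - u x\<bar> powr p
      = deg w x * (w x y / deg w x * \<bar>ext_psi \<Omega> u \<psi> y - u x\<bar> powr p)"
    using dpos by simp
  also have "\<dots> \<le> g x" unfolding g_def mG_int_def
    apply (rule mult_left_mono[OF _ less_imp_le[OF dpos]])
    apply (rule member_le_sum[OF _ _ fn, where f="\<lambda>y. w x y / deg w x * \<bar>ext_psi \<Omega> u \<psi> y - u x\<bar> powr p"])
    using y wxy wg by (auto simp: nbrs_def intro!: divide_nonneg_nonneg deg_nonneg)
  also have "\<dots> \<le> sum g \<Omega>" using x fin g0 by (intro member_le_sum) auto
  also have "\<dots> = nuG_int w \<Omega> (\<lambda>x. mG_int w x (mclosure w \<Omega>)
                (\<lambda>y. \<bar>ext_psi \<Omega> u \<psi> y - u x\<bar> powr p))"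
    unfolding nuG_int_def g_def using fin by simp
  also have "\<dots> \<le> RR w \<Omega> p u \<psi>" unfolding RR_def nuG_int_def
    using finite_bd[OF wg lf fin] wg
    by (simp add: sum_nonneg deg_nonneg)
  finally show ?thesis .
qed

lemma RR_bd:
  assumes wg: "weighted_graph w" and lf: "locally_finite w" and fin: "finite \<Omega>"
    and b: "b \<in> mboundary w \<Omega>"
  shows "deg w b * \<bar>\<psi> b\<bar> powr p \<le> RR w \<Omega> p u \<psi>"
proof -
  have fb: "finite (mboundary w \<Omega>)" using finite_bd[OF wg lf fin] .
  have "deg w b * \<bar>\<psi> b\<bar> powr p \<le> nuG_int w (mboundary w \<Omega>) (\<lambda>y. \<bar>\<psi> y\<bar> powr p)"
    unfolding nuG_int_def using fb b wg
    by (simp, intro member_le_sum) (auto simp: deg_nonneg)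
  moreover have "0 \<le> nuG_int w \<Omega> (\<lambda>x. mG_int w x (mclosure w \<Omega>)
                (\<lambda>y. \<bar>ext_psi \<Omega> u \<psi> y - u x\<bar> powr p))"
    unfolding nuG_int_def using fin by (simp add: sum_nonneg RR_parts_nonneg[OF wg])
  ultimately show ?thesis unfolding RR_def by linarith
qed

lemma RR_nonneg:
  assumes wg: "weighted_graph w" and lf: "locally_finite w" and fin: "finite \<Omega>"
  shows "0 \<le> RR w \<Omega> p u \<psi>"
  unfolding RR_def nuG_int_def using fin finite_bd[OF wg lf fin] wg
  by (simp add: sum_nonneg RR_parts_nonneg[OF wg] deg_nonneg)

lemma tri_powr:
  fixes a b A B p :: real
  assumes "0 < p" "\<bar>a - b\<bar> powr p \<le> A" "\<bar>b\<bar> powr p \<le> B"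
  shows "\<bar>a\<bar> powr p \<le> 2 powr p * (A + B)"
proof -
  let ?m = "max \<bar>a - b\<bar> \<bar>b\<bar>"
  have "\<bar>a\<bar> \<le> 2 * ?m" by (simp add: max_def abs_if)
  then have "\<bar>a\<bar> powr p \<le> (2 * ?m) powr p" using assms(1) by (intro powr_mono2) auto
  also have "\<dots> = 2 powr p * ?m powr p" by (simp add: powr_mult)
  also have "?m powr p \<le> A + B"
  proof (cases "\<bar>a - b\<bar> \<le> \<bar>b\<bar>")
    case True then show ?thesis using assms by (simp add: max_def) (smt (verit) powr_ge_zero)
  next
    case False then show ?thesis using assms by (simp add: max_def) (smt (verit) powr_ge_zero)
  qed
  finally show ?thesis by (simp add: mult_left_mono)
qed

theorem mainTheorem13:
  fixes w :: "'a \<Rightarrow> 'a \<Rightarrow> real" and \<Omega> :: "'a set" and p :: real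
  assumes "weighted_graph w"
    and "locally_finite w"
    and "graph_connected w"
    and "deg w summable_on UNIV"
    and "finite \<Omega>"
    and "0 < nuG w \<Omega>"
    and "nuG w \<Omega> < nuG w UNIV"
    and "1 \<le> p"
  shows "poincare_ineq w p \<Omega>"
proof -
  note wg = assms(1) and lf = assms(2) and fin = assms(5)
  have p0: "0 < p" using assms(8) by linarith
  obtain z where z: "z \<notin> \<Omega>"
  proof (cases "\<Omega> = UNIV")
    case True then show ?thesis using assms(7) by simp
  next
    case False then show ?thesis using that by blast
  qed
  have key: "x \<in> \<Omega> \<Longrightarrow> \<exists>K\<ge>0. \<forall>u \<psi>. \<bar>u x\<bar> powr p \<le> K * RR w \<Omega> p u \<psi>"
    if "(\<lambda>a b. 0 < w a b)\<^sup>*\<^sup>* x z" for x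
    using that
  proof (induction rule: converse_rtranclp_induct)
    case base then show ?case using z by simp
  next
    case (step x y)
    have wxy: "0 < w x y" using step.hyps(1) .
    show ?case
    proof (cases "y \<in> \<Omega>")
      case True
      then obtain Ky where Ky: "Ky \<ge> 0" "\<And>u \<psi>. \<bar>u y\<bar> powr p \<le> Ky * RR w \<Omega> p u \<psi>"
        using step.IH by blast
      show ?thesis
      proof (intro exI[of _ "2 powr p * (1 / w x y + Ky)"] conjI allI)
        show "0 \<le> 2 powr p * (1 / w x y + Ky)" using wxy Ky(1) by simp
        fix u \<psi>
        have ymc: "y \<in> mclosure w \<Omega>" using True by (simp add: mclosure_def)
        have e: "w x y * \<bar>u y - u x\<bar> powr p \<le> RR w \<Omega> p u \<psi>"
          using RR_edge[OF wg lf fin step.prems wxy ymc, of u \<psi> p] True by (simp add: ext_psi_def)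
        have A: "\<bar>u x - u y\<bar> powr p \<le> (1 / w x y) * RR w \<Omega> p u \<psi>"
          using e wxy by (simp add: abs_minus_commute field_simps mult.commute)
        have "\<bar>u x\<bar> powr p \<le> 2 powr p * ((1 / w x y) * RR w \<Omega> p u \<psi> + Ky * RR w \<Omega> p u \<psi>)"
          by (rule tri_powr[OF p0 A Ky(2)[of u \<psi>]])
        then show "\<bar>u x\<bar> powr p \<le> 2 powr p * (1 / w x y + Ky) * RR w \<Omega> p u \<psi>"
          by (simp add: algebra_simps)
      qed
    next
      case False
      have wyx: "0 < w y x" using wxy wg by (simp add: weighted_graph_def)
      have dy: "w y x \<le> deg w y" by (rule deg_ge[OF wg lf wyx])
      have fy: "finite (nbrs w y \<inter> \<Omega>)" using lf by (simp add: locally_finite_def)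
      have sy: "w y x \<le> (\<Sum>v\<in>nbrs w y \<inter> \<Omega>. w y v)"
        by (rule member_le_sum[OF _ _ fy, where f="w y"])
           (use step.prems wyx in \<open>auto simp: nbrs_def\<close>)
      have "0 < mG w y \<Omega>" unfolding mG_def using sy dy wyx by simp
      then have yb: "y \<in> mboundary w \<Omega>" using False by (simp add: mboundary_def)
      have dpos: "0 < deg w y" using dy wyx by linarith
      show ?thesis
      proof (intro exI[of _ "2 powr p * (1 / w x y + 1 / deg w y)"] conjI allI)
        show "0 \<le> 2 powr p * (1 / w x y + 1 / deg w y)" using wxy dpos by simp
        fix u \<psi>
        have ymc: "y \<in> mclosure w \<Omega>" using yb by (simp add: mclosure_def)
        have e: "w x y * \<bar>\<psi> y - u x\<bar> powr p \<le> RR w \<Omega> p u \<psi>"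
          using RR_edge[OF wg lf fin step.prems wxy ymc, of u \<psi> p] False by (simp add: ext_psi_def)
        have A: "\<bar>u x - \<psi> y\<bar> powr p \<le> (1 / w x y) * RR w \<Omega> p u \<psi>"
          using e wxy by (simp add: abs_minus_commute field_simps mult.commute)
        have b: "deg w y * \<bar>\<psi> y\<bar> powr p \<le> RR w \<Omega> p u \<psi>" by (rule RR_bd[OF wg lf fin yb])
        have B: "\<bar>\<psi> y\<bar> powr p \<le> (1 / deg w y) * RR w \<Omega> p u \<psi>"
          using b dpos by (simp add: field_simps mult.commute)
        have "\<bar>u x\<bar> powr p \<le> 2 powr p * ((1 / w x y) * RR w \<Omega> p u \<psi> + (1 / deg w y) * RR w \<Omega> p u \<psi>)"
          by (rule tri_powr[OF p0 A B])
        then show "\<bar>u x\<bar> powr p \<le> 2 powr p * (1 / w x y + 1 / deg w y) * RR w \<Omega> p u \<psi>"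
          by (simp add: algebra_simps)
      qed
    qed
  qed
  have "\<forall>x\<in>\<Omega>. \<exists>K. K \<ge> 0 \<and> (\<forall>u \<psi>. \<bar>u x\<bar> powr p \<le> K * RR w \<Omega> p u \<psi>)"
    using key assms(3) unfolding graph_connected_def by blast
  then obtain K where K: "\<And>x. x \<in> \<Omega> \<Longrightarrow> K x \<ge> 0"
    "\<And>x u \<psi>. x \<in> \<Omega> \<Longrightarrow> \<bar>u x\<bar> powr p \<le> K x * RR w \<Omega> p u \<psi>"
    by metis
  define S where "S = (\<Sum>x\<in>\<Omega>. deg w x * K x)"
  have S0: "0 \<le> S" unfolding S_def using K(1) by (intro sum_nonneg) (simp add: deg_nonneg[OF wg])
  show ?thesis unfolding poincare_ineq_def
  proof (intro exI[of _ "1 / (1 + S)"] conjI allI impI)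
    show "0 < 1 / (1 + S)" using S0 by simp
    fix u \<psi> :: "'a \<Rightarrow> real"
    have R0: "0 \<le> RR w \<Omega> p u \<psi>" by (rule RR_nonneg[OF wg lf fin])
    have "nuG_int w \<Omega> (\<lambda>x. \<bar>u x\<bar> powr p) = (\<Sum>x\<in>\<Omega>. deg w x * \<bar>u x\<bar> powr p)"
      unfolding nuG_int_def using fin by simp
    also have "\<dots> \<le> (\<Sum>x\<in>\<Omega>. deg w x * (K x * RR w \<Omega> p u \<psi>))"
      by (intro sum_mono mult_left_mono K(2) deg_nonneg[OF wg])
    also have "\<dots> = S * RR w \<Omega> p u \<psi>" unfolding S_def by (simp add: sum_distrib_right mult.assoc)
    also have "\<dots> \<le> (1 + S) * RR w \<Omega> p u \<psi>" using R0 by (simp add: algebra_simps)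
    finally have "nuG_int w \<Omega> (\<lambda>x. \<bar>u x\<bar> powr p) \<le> (1 + S) * RR w \<Omega> p u \<psi>" .
    then have "1 / (1 + S) * nuG_int w \<Omega> (\<lambda>x. \<bar>u x\<bar> powr p) \<le> RR w \<Omega> p u \<psi>"
      using S0 by (simp add: field_simps mult.commute)
    then show "1 / (1 + S) * nuG_int w \<Omega> (\<lambda>x. \<bar>u x\<bar> powr p)
       \<le> nuG_int w \<Omega> (\<lambda>x. mG_int w x (mclosure w \<Omega>)
                (\<lambda>y. \<bar>ext_psi \<Omega> u \<psi> y - u x\<bar> powr p))
         + nuG_int w (mboundary w \<Omega>) (\<lambda>y. \<bar>\<psi> y\<bar> powr p)"
      by (simp add: RR_def)
  qed
qed

end
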